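(* Let $R$ be a finite commutative unital ring, $N\ge2$ with $N\in R^{\times}$, and $q\in R$ a root of the $N$-th cyclotomic polynomial over $\mathbb{Z}$. Let $u,u'\in R^{\times}$ and $a,a'\in R$. If $\mathrm{Id}_{H_N^q}(\mathcal{B}_{(u,a)})=\mathrm{Id}_{H_N^q}(\mathcal{B}_{(u',a')})$, then there exists $s\in R^{\times}$ such that $u'=s^Nu$.
   Context: $H_N^q$ is the Taft Hopf algebra over $R$: generated by $g,x$ with $g^N=1$, $x^N=0$, $xg=qgx$, $\Delta(g)=g\otimes g$, $\Delta(x)=1\otimes x+x\otimes g$, $\varepsilon(g)=1$, $\varepsilon(x)=0$, free over $R$ with basis $\{g^mx^n:0\le m,n<N\}$. For $u\in R^{\times},a\in R$, $\mathcal{B}_{(u,a)}$ is the $R$-algebra generated by $v_g,v_x$ with $v_g^N=u$, $v_x^N=a$, $v_xv_g=qv_gv_x$, a right $H_N^q$-comodule algebra via $v_g\mapsto v_g\otimes g$, $v_x\mapsto1\otimes x+v_x\otimes g$. Let $Z_i^H$ ($i\ge1$) be copies $\{Z_i^h:h\in H_N^q\}$ of the $R$-module $H_N^q$ and $T=T(\bigoplus_iZ_i^H)$ the tensor algebra with coaction $\delta(Z_i^h)=\sum Z_i^{h_1}\otimes h_2$. $P\in T$ is a polynomial $H_N^q$-identity for a right $H_N^q$-comodule algebra $B$ if $f(P)=0$ for all right $H_N^q$-comodule algebra maps $f:T\to B$; $\mathrm{Id}_{H_N^q}(B)$ is the set of these. *)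

theory Defs
  imports Complex_Main "HOL-Computational_Algebra.Polynomial"
begin

definition cyclotomic_poly :: "nat \<Rightarrow> int poly" where
  "cyclotomic_poly N = (THE p. map_poly of_int p =
      (\<Prod>k\<in>{k. k < N \<and> coprime k N}. [:- cis (2 * pi * real k / real N), 1:]))"

text \<open>Elements are coordinate functions on the basis index set box N; the basis element
  indexed (m,n) stands for g^m x^n (in H) resp. v_g^m v_x^n (in B). Coordinates outside
  box N are zero.\<close>
definition box :: "nat \<Rightarrow> (nat \<times> nat) set" where
  "box N = {..<N} \<times> {..<N}"

definition bvec :: "nat \<Rightarrow> (nat \<times> nat \<Rightarrow> 'a::zero) set" where
  "bvec N = {v. \<forall>k. k \<notin> box N \<longrightarrow> v k = 0}"

definition bas :: "nat \<times> nat \<Rightarrow> nat \<times> nat \<Rightarrow> 'a::{zero,one}" where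
  "bas k = (\<lambda>k'. if k' = k then 1 else 0)"

text \<open>Structure constants of the algebra generated by v_g, v_x with v_g^N = u, v_x^N = a,
  v_x v_g = q v_g v_x:
  (v_g^m1 v_x^n1)(v_g^m2 v_x^n2) = q^(n1 m2) v_g^(m1+m2) v_x^(n1+n2), then reduce.
  The Taft algebra H_N^q is the case u = 1, a = 0 (g = v_g, x = v_x).\<close>
definition mtab :: "nat \<Rightarrow> 'a::comm_ring_1 \<Rightarrow> 'a \<Rightarrow> 'a \<Rightarrow>
    nat \<times> nat \<Rightarrow> nat \<times> nat \<Rightarrow> nat \<times> nat \<Rightarrow> 'a" where
  "mtab N q u a i j k =
     (if k = ((fst i + fst j) mod N, (snd i + snd j) mod N)
      then q ^ (snd i * fst j) * (if N \<le> fst i + fst j then u else 1)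
             * (if N \<le> snd i + snd j then a else 1)
      else 0)"

definition bmult :: "nat \<Rightarrow> 'a::comm_ring_1 \<Rightarrow> 'a \<Rightarrow> 'a \<Rightarrow>
    (nat \<times> nat \<Rightarrow> 'a) \<Rightarrow> (nat \<times> nat \<Rightarrow> 'a) \<Rightarrow> (nat \<times> nat \<Rightarrow> 'a)" where
  "bmult N q u a x y = (\<lambda>k. if k \<in> box N then
      (\<Sum>i\<in>box N. \<Sum>j\<in>box N. x i * y j * mtab N q u a i j k) else 0)"

definition bunit :: "nat \<times> nat \<Rightarrow> 'a::comm_ring_1" where
  "bunit = bas (0, 0)"

definition tmult :: "nat \<Rightarrow> 'a::comm_ring_1 \<Rightarrow> 'a \<Rightarrow> 'a \<Rightarrow>
    ((nat \<times> nat) \<times> (nat \<times> nat) \<Rightarrow> 'a) \<Rightarrow> ((nat \<times> nat) \<times> (nat \<times> nat) \<Rightarrow> 'a)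
    \<Rightarrow> ((nat \<times> nat) \<times> (nat \<times> nat) \<Rightarrow> 'a)" where
  "tmult N q u a x y = (\<lambda>(k1, k2). if k1 \<in> box N \<and> k2 \<in> box N then
      (\<Sum>i\<in>box N \<times> box N. \<Sum>j\<in>box N \<times> box N.
          x i * y j * mtab N q u a (fst i) (fst j) k1 * mtab N q 1 0 (snd i) (snd j) k2)
      else 0)"

definition tunit :: "(nat \<times> nat) \<times> (nat \<times> nat) \<Rightarrow> 'a::comm_ring_1" where
  "tunit = (\<lambda>k. if k = ((0, 0), (0, 0)) then 1 else 0)"

definition tens :: "(nat \<times> nat \<Rightarrow> 'a::comm_ring_1) \<Rightarrow> (nat \<times> nat \<Rightarrow> 'a)
    \<Rightarrow> ((nat \<times> nat) \<times> (nat \<times> nat) \<Rightarrow> 'a)" where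
  "tens v w = (\<lambda>(k1, k2). v k1 * w k2)"

definition tpow :: "nat \<Rightarrow> 'a::comm_ring_1 \<Rightarrow> 'a \<Rightarrow> 'a \<Rightarrow>
    ((nat \<times> nat) \<times> (nat \<times> nat) \<Rightarrow> 'a) \<Rightarrow> nat \<Rightarrow> ((nat \<times> nat) \<times> (nat \<times> nat) \<Rightarrow> 'a)" where
  "tpow N q u a x n = ((tmult N q u a x) ^^ n) tunit"

text \<open>rho is the algebra map with rho(v_g) = v_g (x) g, rho(v_x) = 1 (x) x + v_x (x) g,
  so rho(v_g^m v_x^n) = rho(v_g)^m rho(v_x)^n, extended R-linearly.
  For u = 1, a = 0 this is the comultiplication Delta of H_N^q.\<close>
definition rho :: "nat \<Rightarrow> 'a::comm_ring_1 \<Rightarrow> 'a \<Rightarrow> 'a \<Rightarrow>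
    (nat \<times> nat \<Rightarrow> 'a) \<Rightarrow> ((nat \<times> nat) \<times> (nat \<times> nat) \<Rightarrow> 'a)" where
  "rho N q u a b = (\<lambda>k. \<Sum>m\<in>box N. b m *
      tmult N q u a
        (tpow N q u a (tens (bas (1, 0)) (bas (1, 0))) (fst m))
        (tpow N q u a (\<lambda>k'. tens (bas (0, 0)) (bas (0, 1)) k' + tens (bas (0, 1)) (bas (1, 0)) k')
           (snd m)) k)"

definition Delta :: "nat \<Rightarrow> 'a::comm_ring_1 \<Rightarrow>
    (nat \<times> nat \<Rightarrow> 'a) \<Rightarrow> ((nat \<times> nat) \<times> (nat \<times> nat) \<Rightarrow> 'a)" where
  "Delta N q = rho N q 1 0"

text \<open>T = T(direct sum of Z_i^H, i >= 1) is the free noncommutative R-algebra on the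
  variables Z_i^{g^m x^n} (i >= 1, (m,n) in box N), since H is free on that basis.\<close>
definition tpoly :: "nat \<Rightarrow> ((nat \<times> (nat \<times> nat)) list \<Rightarrow> 'a::comm_ring_1) set" where
  "tpoly N = {P. finite {w. P w \<noteq> 0} \<and>
      (\<forall>w. P w \<noteq> 0 \<longrightarrow> (\<forall>l\<in>set w. 1 \<le> fst l \<and> snd l \<in> box N))}"

text \<open>An algebra map f : T -> B is determined by phi i h = f(Z_i^h) on basis elements h;
  it is a map of right H-comodules iff each R-linear map h |-> f(Z_i^h) is colinear,
  i.e. rho(f(Z_i^h)) = sum f(Z_i^{h_1}) (x) h_2.\<close>
definition comod_alg_maps :: "nat \<Rightarrow> 'a::comm_ring_1 \<Rightarrow> 'a \<Rightarrow> 'a \<Rightarrow>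
    (nat \<Rightarrow> nat \<times> nat \<Rightarrow> nat \<times> nat \<Rightarrow> 'a) set" where
  "comod_alg_maps N q u a = {phi. \<forall>i\<ge>1. \<forall>h\<in>box N. phi i h \<in> bvec N \<and>
      rho N q u a (phi i h) =
        (\<lambda>(k1, k2). \<Sum>j\<in>box N. Delta N q (bas h) (j, k2) * phi i j k1)}"

definition teval :: "nat \<Rightarrow> 'a::comm_ring_1 \<Rightarrow> 'a \<Rightarrow> 'a \<Rightarrow>
    (nat \<Rightarrow> nat \<times> nat \<Rightarrow> nat \<times> nat \<Rightarrow> 'a) \<Rightarrow>
    ((nat \<times> (nat \<times> nat)) list \<Rightarrow> 'a) \<Rightarrow> (nat \<times> nat \<Rightarrow> 'a)" where
  "teval N q u a phi P = (\<lambda>k. \<Sum>w\<in>{w. P w \<noteq> 0}.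
      P w * foldr (\<lambda>l acc. bmult N q u a (phi (fst l) (snd l)) acc) w bunit k)"

definition poly_H_identities :: "nat \<Rightarrow> 'a::comm_ring_1 \<Rightarrow> 'a \<Rightarrow> 'a \<Rightarrow>
    ((nat \<times> (nat \<times> nat)) list \<Rightarrow> 'a) set" where
  "poly_H_identities N q u a = {P \<in> tpoly N. \<forall>phi\<in>comod_alg_maps N q u a.
      teval N q u a phi P = (\<lambda>_. 0)}"

end

theory Submission
  imports Defs
begin

definition nilp :: "'a::comm_ring_1 \<Rightarrow> bool" where "nilp x \<longleftrightarrow> (\<exists>k. x ^ k = 0)"

lemma nilp_mult: "nilp x \<Longrightarrow> nilp (y * x)"
  unfolding nilp_def by (metis mult_zero_right power_mult_distrib)

lemma nilp_add:
  assumes "nilp x" "nilp y" shows "nilp (x + y)"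
proof -
  obtain k l where k: "x ^ k = 0" and l: "y ^ l = 0" using assms unfolding nilp_def by blast
  have "(x + y) ^ (k + l) = (\<Sum>i\<le>k+l. of_nat ((k+l) choose i) * x ^ i * y ^ (k + l - i))"
    by (rule binomial_ring)
  also have "\<dots> = 0"
  proof (rule sum.neutral, intro ballI)
    fix i assume "i \<in> {..k+l}"
    show "of_nat ((k+l) choose i) * x ^ i * y ^ (k + l - i) = 0"
    proof (cases "k \<le> i")
      case True
      then have "x ^ i = x ^ k * x ^ (i - k)" by (simp add: power_add[symmetric])
      then show ?thesis using k by simp
    next
      case False
      then have "k + l - i = l + (k - i)" by simp
      then have "y ^ (k + l - i) = y ^ l * y ^ (k - i)" by (simp add: power_add)
      then show ?thesis using l by simp
    qed
  qed
  finally show ?thesis unfolding nilp_def by blast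
qed

lemma nilp_0: "nilp 0" unfolding nilp_def by (metis power_one_right)

lemma unit_minus_nilp:
  fixes c n :: "'a::comm_ring_1"
  assumes "c dvd 1" "nilp n" shows "(c - n) dvd 1"
proof -
  obtain ci where ci: "1 = c * ci" using assms(1) by (auto elim: dvdE)
  have "nilp (ci * n)" using assms(2) by (rule nilp_mult)
  then obtain k where k: "(ci * n) ^ k = 0" unfolding nilp_def by blast
  have "1 = (1 - ci * n) * (\<Sum>i<k. (ci*n)^i)" using one_diff_power_eq[of "ci*n" k] k by simp
  then have "(1 - ci * n) dvd 1" by (metis dvd_triv_left)
  have cn: "c * (ci * n) = n" using ci by (metis mult.assoc mult_1)
  have eq: "c - n = c * (1 - ci * n)" using cn by (simp add: right_diff_distrib)
  show ?thesis unfolding eq using assms(1) \<open>(1 - ci * n) dvd 1\<close> by (metis mult_dvd_mono mult_1)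
qed

lemma idem_compl:
  fixes e :: "'a::comm_ring_1" assumes "e * e = e"
  shows "(1 - e) * (1 - e) = 1 - e" "e * (1 - e) = 0"
  using assms by (simp_all add: algebra_simps)

lemma idem_power:
  fixes x :: "'a::{comm_ring_1,finite}"
  shows "\<exists>M\<ge>1. x ^ M * x ^ M = x ^ M \<and> nilp (x * (1 - x ^ M))"
proof -
  have "\<not> inj (\<lambda>n::nat. x ^ n)"
  proof
    assume "inj (\<lambda>n::nat. x ^ n)"
    then have "finite (UNIV :: nat set)"
      using finite_imageD[of "\<lambda>n::nat. x ^ n" UNIV] by (metis finite inj_on_subset subset_UNIV)
    then show False by simp
  qed
  then obtain i j where ij: "i \<noteq> j" "x ^ i = x ^ j" unfolding inj_def by blast
  then obtain i d where d: "d \<ge> 1" "x ^ i = x ^ (i + d)"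
    by (cases "i < j") (metis le_add_diff_inverse less_imp_le_nat linorder_neqE_nat zero_less_diff less_one not_less)+
  have per: "x ^ (n + t * d) = x ^ n" if "n \<ge> i" for n t
  proof (induction t)
    case 0 then show ?case by simp
  next
    case (Suc t)
    have "x ^ (n + Suc t * d) = x ^ (n - i) * x ^ (i + d) * x ^ (t * d)"
      using that by (simp add: power_add[symmetric] algebra_simps)
    also have "\<dots> = x ^ (n + t * d)" using d(2)[symmetric] that by (simp add: power_add[symmetric])
    finally show ?case using Suc by simp
  qed
  define M where "M = (i + 1) * d"
  have iid: "i * 1 \<le> i * d" using d(1) by (rule mult_le_mono2)
  have Meq: "M = i * d + d" by (simp add: M_def algebra_simps)
  have M1: "M \<ge> 1" "M \<ge> i" using d(1) iid Meq by linarith+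
  have E: "x ^ M * x ^ M = x ^ M"
    using per[OF M1(2), of "i+1"] by (simp add: M_def power_add[symmetric])
  have "(x * (1 - x ^ M)) ^ M = 0"
  proof -
    have "(1 - x ^ M) ^ n = 1 - x ^ M" if "n \<ge> 1" for n
      using that
    proof (induction n rule: dec_induct)
      case base then show ?case by simp
    next
      case (step n) then show ?case using idem_compl(1)[OF E] by simp
    qed
    then have "(x * (1 - x ^ M)) ^ M = x ^ M * (1 - x ^ M)" using M1 by (simp add: power_mult_distrib)
    also have "\<dots> = 0" using idem_compl(2)[OF E] .
    finally show ?thesis .
  qed
  then show ?thesis using M1 E unfolding nilp_def by blast
qed

lemma idem_pow_sum:
  fixes x y e :: "'a::comm_ring_1"
  assumes "e * e = e"
  shows "(y * (1 - e) + x * e) ^ n = y ^ n * (1 - e) + x ^ n * e"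
proof (induction n)
  case 0 then show ?case by simp
next
  case (Suc n)
  have "(y * (1 - e) + x * e) ^ Suc n = (y * (1 - e) + x * e) * (y ^ n * (1 - e) + x ^ n * e)"
    using Suc by simp
  also have "\<dots> = y*y^n*((1-e)*(1-e)) + x*x^n*(e*e) + (x*y^n + y*x^n)*(e*(1-e))"
    by (simp add: algebra_simps)
  also have "\<dots> = y ^ Suc n * (1 - e) + x ^ Suc n * e"
    using assms by (simp add: algebra_simps)
  finally show ?case .
qed

lemma one_plus_sq: "\<exists>v. (1 + z) ^ m = 1 + of_nat m * z + z^2 * (v::'a::comm_ring_1)"
proof (induction m)
  case 0 then show ?case by (auto intro: exI[of _ 0])
next
  case (Suc m)
  then obtain v where v: "(1 + z) ^ m = 1 + of_nat m * z + z^2 * v" by blast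
  show ?case
    by (rule exI[of _ "v + of_nat m + z * v"]) (simp add: v algebra_simps power2_eq_square)
qed

lemma one_plus_char_pow:
  fixes z :: "'a::comm_ring_1"
  assumes "of_nat m = (0::'a)"
  shows "\<exists>w. (1 + z) ^ (m ^ j) = 1 + z ^ (j + 1) * w"
proof (induction j)
  case 0 then show ?case by (auto intro: exI[of _ 1])
next
  case (Suc j)
  then obtain w where w: "(1 + z) ^ (m ^ j) = 1 + z ^ (j + 1) * w" by blast
  obtain v where v: "(1 + z ^ (j + 1) * w) ^ m = 1 + of_nat m * (z ^ (j + 1) * w) + (z ^ (j + 1) * w)^2 * v"
    using one_plus_sq by blast
  have "(1 + z) ^ (m ^ Suc j) = ((1 + z) ^ (m ^ j)) ^ m"
    by (simp add: power_mult[symmetric] mult.commute)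
  also have "\<dots> = 1 + z ^ (Suc j + 1) * (z ^ j * w^2 * v)"
    using v assms by (simp add: w power2_eq_square algebra_simps power_add[symmetric])
  finally show ?case by blast
qed

lemma root_one_plus_nilp:
  fixes z :: "'a::{comm_ring_1,finite}"
  assumes N: "(of_nat N :: 'a) dvd 1" "N \<ge> 1" and z: "nilp z"
  shows "\<exists>y. y dvd 1 \<and> y ^ N = 1 + z"
proof -
  define m where "m = CHAR('a)"
  have m0: "m > 0" unfolding m_def by (rule finite_imp_CHAR_pos) simp
  have mz: "of_nat m = (0::'a)" unfolding m_def by simp
  have cop: "gcd N m = 1"
  proof (rule ccontr)
    assume ne: "gcd N m \<noteq> 1"
    define d where "d = gcd N m"
    have d1: "d > 1" using ne m0 unfolding d_def by (metis gcd_pos_nat less_one nat_neq_iff)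
    have dm: "d dvd m" "d dvd N" unfolding d_def by auto
    have "of_nat (m div d) * (of_nat N :: 'a) = 0"
    proof -
      have "(m div d) * N = m * (N div d)" using dm by (metis dvd_div_mult mult.commute)
      then have "of_nat (m div d) * (of_nat N :: 'a) = of_nat m * of_nat (N div d)" by (metis of_nat_mult)
      then show ?thesis using mz by simp
    qed
    moreover obtain Ni where Ni: "1 = (of_nat N :: 'a) * Ni" using N(1) by (auto elim: dvdE)
    ultimately have "of_nat (m div d) = (0::'a)" by (metis mult.assoc mult_1_right mult_zero_left)
    then have "m dvd (m div d)" unfolding m_def by (simp add: of_nat_eq_0_iff_char_dvd)
    moreover have "0 < m div d" "m div d < m" using d1 dm m0
      by (auto simp: dvd_div_eq_0_iff intro!: div_less_dividend)
    ultimately show False by (simp add: nat_dvd_not_less)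
  qed
  obtain K where K: "z ^ K = 0" using z unfolding nilp_def by blast
  obtain w where w: "(1 + z) ^ (m ^ K) = 1 + z ^ (K + 1) * w" using one_plus_char_pow[OF mz] by blast
  have one: "(1 + z) ^ (m ^ K) = 1" using w K by simp
  have "gcd N (m ^ K) = 1" using cop by (metis coprime_iff_gcd_eq_1 coprime_power_right_iff)
  then obtain \<alpha> \<beta> where ab: "N * \<alpha> = m ^ K * \<beta> + 1" using bezout_nat[of N "m^K"] N(2) by auto
  define y where "y = (1 + z) ^ \<alpha>"
  have "y ^ N = (1 + z) ^ (N * \<alpha>)" unfolding y_def by (simp add: power_mult[symmetric] mult.commute)
  also have "\<dots> = ((1 + z) ^ (m ^ K)) ^ \<beta> * (1 + z)" unfolding ab by (simp add: power_add power_mult)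
  also have "\<dots> = 1 + z" using one by simp
  finally have yN: "y ^ N = 1 + z" .
  have "(1 + z) dvd 1" using unit_minus_nilp[of 1 "-z"] z nilp_mult[of z "-1"] by simp
  then have "y dvd 1" using yN N(2) by (metis dvd_power dvd_trans le_neq_implies_less less_one not_less zero_less_iff_neq_zero)
  then show ?thesis using yN by blast
qed

lemma patch:
  fixes c :: "'a::comm_ring_1" and E :: "'a \<Rightarrow> 'a"
  assumes EE: "\<And>r. E r * E r = E r"
    and nE: "\<And>r. nilp ((c - r ^ N) * (1 - E r))"
    and fin: "finite A"
  shows "\<exists>s. nilp ((c - s ^ N) * (1 - (\<Prod>r\<in>A. E r)))"
  using fin
proof (induction A rule: finite_induct)
  case empty then show ?case using nilp_0 by simp
next
  case (insert r A)
  then obtain s where s: "nilp ((c - s ^ N) * (1 - (\<Prod>r\<in>A. E r)))" by blast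
  define F where "F = (\<Prod>r\<in>A. E r)"
  define e where "e = E r"
  have ee: "e * e = e" using EE e_def by simp
  have e2: "e * (e * z) = e * z" for z using ee by (metis mult.assoc)
  define s' where "s' = r * (1 - e) + s * e"
  have s'N: "s' ^ N = r ^ N * (1 - e) + s ^ N * e" unfolding s'_def by (rule idem_pow_sum[OF ee])
  have "(c - s' ^ N) * (1 - e * F) = (c - r ^ N) * (1 - e) + e * ((c - s ^ N) * (1 - F))"
    unfolding s'N by (simp add: algebra_simps e2 ee)
  moreover have "nilp ((c - r ^ N) * (1 - e) + e * ((c - s ^ N) * (1 - F)))"
    using nE[of r] nilp_mult[OF s, of e] unfolding e_def F_def by (intro nilp_add)
  ultimately show ?case using insert(1,2) unfolding F_def e_def by (metis prod.insert)
qed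

lemma nth_power_lemma:
  fixes c :: "'a::{comm_ring_1,finite}"
  assumes N: "(of_nat N :: 'a) dvd 1" "N \<ge> 1" and c: "c dvd 1"
    and P: "(\<Prod>r\<in>UNIV. c - r ^ N) = 0"
  shows "\<exists>s. s dvd 1 \<and> c = s ^ N"
proof -
  have "\<forall>r. \<exists>M\<ge>1. (c - r^N) ^ M * (c - r^N) ^ M = (c - r^N) ^ M \<and> nilp ((c - r^N) * (1 - (c - r^N) ^ M))"
    using idem_power by blast
  then obtain M where M: "\<And>r. M r \<ge> 1" "\<And>r. (c - r^N) ^ M r * (c - r^N) ^ M r = (c - r^N) ^ M r"
    "\<And>r. nilp ((c - r^N) * (1 - (c - r^N) ^ M r))" by metis
  define E where "E r = (c - r^N) ^ M r" for r
  have EE: "E r * E r = E r" for r unfolding E_def by (rule M(2))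
  have nE: "nilp ((c - r ^ N) * (1 - E r))" for r unfolding E_def by (rule M(3))
  have "\<exists>s. nilp ((c - s ^ N) * (1 - (\<Prod>r\<in>UNIV. E r)))"
    by (rule patch[OF EE nE finite_UNIV])
  then obtain s where s: "nilp ((c - s ^ N) * (1 - (\<Prod>r\<in>UNIV. E r)))" by blast
  have PE: "(\<Prod>r\<in>UNIV. E r) = (\<Prod>r\<in>UNIV. (c - r^N) * (c - r^N) ^ (M r - 1))"
  proof (rule prod.cong)
    fix r :: 'a
    have "E r = (c - r^N) ^ Suc (M r - 1)" unfolding E_def using M(1)[of r] by simp
    then show "E r = (c - r^N) * (c - r^N) ^ (M r - 1)" by simp
  qed simp
  note PE
  also have "\<dots> = 0" by (simp add: prod.distrib P)
  finally have nn: "nilp (c - s ^ N)" using s by simp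
  define n where "n = c - s ^ N"
  have sN: "s ^ N = c - n" unfolding n_def by simp
  have "(c - (c - s ^ N)) dvd 1" by (rule unit_minus_nilp[OF c nn])
  then have "(s ^ N) dvd 1" by simp
  then have su: "s dvd 1" using N(2) by (metis dvd_power dvd_trans le_neq_implies_less less_one not_less zero_less_iff_neq_zero)
  then obtain si where si: "1 = s * si" by (auto elim: dvdE)
  have "nilp (si ^ N * n)" using nn unfolding n_def by (rule nilp_mult)
  then obtain y where y: "y dvd 1" "y ^ N = 1 + si ^ N * n" using root_one_plus_nilp[OF N] by blast
  have "(s * y) ^ N = s ^ N + (s * si) ^ N * n" by (simp add: power_mult_distrib y algebra_simps)
  also have "\<dots> = c" using si[symmetric] by (simp add: n_def)
  finally show ?thesis using su y(1) by (metis mult_dvd_mono mult_1)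
qed

definition bas2 :: "(nat \<times> nat) \<times> (nat \<times> nat) \<Rightarrow> (nat \<times> nat) \<times> (nat \<times> nat) \<Rightarrow> 'a::comm_ring_1" where
  "bas2 p = (\<lambda>k. if k = p then 1 else 0)"

definition Gel :: "(nat \<times> nat) \<times> (nat \<times> nat) \<Rightarrow> 'a::comm_ring_1" where
  "Gel = tens (bas (1, 0)) (bas (1, 0))"

definition Xel :: "(nat \<times> nat) \<times> (nat \<times> nat) \<Rightarrow> 'a::comm_ring_1" where
  "Xel = (\<lambda>k'. tens (bas (0, 0)) (bas (0, 1)) k' + tens (bas (0, 1)) (bas (1, 0)) k')"

lemma rho_alt: "rho N q u a b = (\<lambda>k. \<Sum>m\<in>box N. b m *
   tmult N q u a (tpow N q u a Gel (fst m)) (tpow N q u a Xel (snd m)) k)"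
  unfolding rho_def Gel_def Xel_def by simp

lemma tens_bas: "tens (bas p) (bas p') = bas2 (p, p')"
  by (auto simp: tens_def bas_def bas2_def fun_eq_iff)

lemma Gel_bas2: "Gel = bas2 ((1,0),(1,0))" unfolding Gel_def tens_bas ..

lemma Xel_bas2: "Xel k = bas2 ((0,0),(0,1)) k + bas2 ((0,1),(1,0)) k"
  unfolding Xel_def tens_bas ..

lemma Xel_nz: "Xel k \<noteq> (0::'a::comm_ring_1) \<Longrightarrow> k = ((0,0),(0,1)) \<or> k = ((0,1),(1,0))"
  unfolding Xel_bas2 bas2_def by (auto split: if_splits)

lemma Xel_p1: "Xel ((0,0),(0,1)) = (1::'a::comm_ring_1)"
  unfolding Xel_bas2 bas2_def by simp

lemma tunit_bas2: "tunit = bas2 ((0,0),(0,0))"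
  unfolding tunit_def bas2_def ..

lemma tpow_0: "tpow N q u a x 0 = tunit" unfolding tpow_def by simp
lemma tpow_Suc: "tpow N q u a x (Suc n) = tmult N q u a x (tpow N q u a x n)"
  unfolding tpow_def by simp

lemma mtab_nz: "mtab N q u a i j k \<noteq> 0 \<Longrightarrow> k = ((fst i + fst j) mod N, (snd i + snd j) mod N)"
  unfolding mtab_def by (simp split: if_splits)

lemma mtab_indep: "fst i + fst j < N \<Longrightarrow> snd i + snd j < N \<Longrightarrow> mtab N q u a i j k = mtab N q u' a' i j k"
  unfolding mtab_def by simp

lemma tmult_out: "\<not> (fst k \<in> box N \<and> snd k \<in> box N) \<Longrightarrow> tmult N q u a x y k = 0"
  unfolding tmult_def by (cases k) auto

lemma tmult_nz:
  assumes "tmult N q u a x y k \<noteq> 0"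
  shows "\<exists>i\<in>box N \<times> box N. \<exists>j\<in>box N \<times> box N. x i \<noteq> 0 \<and> y j \<noteq> 0 \<and>
    mtab N q u a (fst i) (fst j) (fst k) \<noteq> 0 \<and> mtab N q 1 0 (snd i) (snd j) (snd k) \<noteq> 0 \<and>
    fst k \<in> box N \<and> snd k \<in> box N"
proof -
  obtain k1 k2 where k: "k = (k1, k2)" by (metis surj_pair)
  have kb: "k1 \<in> box N \<and> k2 \<in> box N"
  proof (rule ccontr)
    assume "\<not> (k1 \<in> box N \<and> k2 \<in> box N)"
    then have "tmult N q u a x y k = 0" using k by (intro tmult_out) simp
    then show False using assms by simp
  qed
  have "(\<Sum>i\<in>box N \<times> box N. \<Sum>j\<in>box N \<times> box N.
          x i * y j * mtab N q u a (fst i) (fst j) k1 * mtab N q 1 0 (snd i) (snd j) k2) \<noteq> 0"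
    using assms kb unfolding k tmult_def by simp
  then obtain i where i: "i \<in> box N \<times> box N" and
    si: "(\<Sum>j\<in>box N \<times> box N. x i * y j * mtab N q u a (fst i) (fst j) k1 * mtab N q 1 0 (snd i) (snd j) k2) \<noteq> 0"
    by (rule sum.not_neutral_contains_not_neutral)
  from si obtain j where j: "j \<in> box N \<times> box N" and
    "x i * y j * mtab N q u a (fst i) (fst j) k1 * mtab N q 1 0 (snd i) (snd j) k2 \<noteq> 0"
    by (rule sum.not_neutral_contains_not_neutral)
  then show ?thesis using i kb k by (intro bexI[OF _ i] bexI[OF _ j]) auto
qed

lemma prod4_nz: "\<not> (a * b * c * d = (0::'a::comm_ring_1)) \<Longrightarrow> a \<noteq> 0 \<and> b \<noteq> 0 \<and> c \<noteq> 0 \<and> d \<noteq> 0"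
  by auto

lemma tmult_single:
  assumes k: "fst k \<in> box N" "snd k \<in> box N" and iz: "iz \<in> box N \<times> box N" and jz: "jz \<in> box N \<times> box N"
    and z: "\<And>i j. i \<in> box N \<times> box N \<Longrightarrow> j \<in> box N \<times> box N \<Longrightarrow> (i, j) \<noteq> (iz, jz) \<Longrightarrow>
      x i * y j * mtab N q u a (fst i) (fst j) (fst k) * mtab N q 1 0 (snd i) (snd j) (snd k) = 0"
  shows "tmult N q u a x y k =
    x iz * y jz * mtab N q u a (fst iz) (fst jz) (fst k) * mtab N q 1 0 (snd iz) (snd jz) (snd k)"
proof -
  obtain k1 k2 where kk: "k = (k1, k2)" by (metis surj_pair)
  define f where "f i j = x i * y j * mtab N q u a (fst i) (fst j) k1 * mtab N q 1 0 (snd i) (snd j) k2" for i j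
  have inner: "(\<Sum>j\<in>box N \<times> box N. f i j) = (if i = iz then f iz jz else 0)" if i: "i \<in> box N \<times> box N" for i
  proof (cases "i = iz")
    case True
    have "(\<Sum>j\<in>box N \<times> box N. f i j) = f i jz + (\<Sum>j\<in>box N \<times> box N - {jz}. f i j)"
      using jz by (simp add: sum.remove box_def)
    also have "(\<Sum>j\<in>box N \<times> box N - {jz}. f i j) = 0"
      using z[OF i] True unfolding f_def kk by (intro sum.neutral) auto
    finally show ?thesis using True by simp
  next
    case False
    then show ?thesis using z[OF i] unfolding f_def kk by (intro trans[OF sum.neutral]) auto
  qed
  have "tmult N q u a x y k = (\<Sum>i\<in>box N \<times> box N. \<Sum>j\<in>box N \<times> box N. f i j)"
    using k unfolding kk tmult_def f_def by simp
  also have "\<dots> = (\<Sum>i\<in>box N \<times> box N. if i = iz then f iz jz else 0)"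
    by (rule sum.cong) (simp_all add: inner)
  also have "\<dots> = f iz jz" using iz by (simp add: box_def)
  finally show ?thesis unfolding f_def kk by simp
qed

lemma tmult_single2:
  assumes "k1 \<in> box N" "k2 \<in> box N" "(i1, i2) \<in> box N \<times> box N" "(j1, j2) \<in> box N \<times> box N"
    and z: "\<And>i j. i \<in> box N \<times> box N \<Longrightarrow> j \<in> box N \<times> box N \<Longrightarrow> (i, j) \<noteq> ((i1, i2), (j1, j2)) \<Longrightarrow>
      x i * y j * mtab N q u a (fst i) (fst j) k1 * mtab N q 1 0 (snd i) (snd j) k2 = 0"
  shows "tmult N q u a x y (k1, k2) = x (i1, i2) * y (j1, j2) * mtab N q u a i1 j1 k1 * mtab N q 1 0 i2 j2 k2"
  using tmult_single[where k="(k1,k2)" and iz="(i1,i2)" and jz="(j1,j2)" and x=x and y=y and N=N and q=q and u=u and a=a] assms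
  by simp

lemma tmult_indep:
  assumes "\<And>i j. x i \<noteq> 0 \<Longrightarrow> y j \<noteq> 0 \<Longrightarrow> fst (fst i) + fst (fst j) < N \<and> snd (fst i) + snd (fst j) < N"
  shows "tmult N q u a x y = tmult N q u' a' x y"
proof (rule ext)
  fix k :: "(nat \<times> nat) \<times> (nat \<times> nat)"
  obtain k1 k2 where kk: "k = (k1, k2)" by (metis surj_pair)
  have "x i * y j * mtab N q u a (fst i) (fst j) k1 = x i * y j * mtab N q u' a' (fst i) (fst j) k1" for i j
  proof (cases "x i = 0 \<or> y j = 0")
    case True then show ?thesis by auto
  next
    case False then show ?thesis using assms[of i j] mtab_indep[of "fst i" "fst j" N q u a k1 u' a'] by auto
  qed
  then show "tmult N q u a x y k = tmult N q u' a' x y k"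
    unfolding kk tmult_def by simp
qed


lemma G_pow: assumes "n < N" shows "tpow N q u a Gel n = bas2 ((n,0),(n,0))"
  using assms
proof (induction n)
  case 0 then show ?case by (simp add: tpow_0 tunit_bas2)
next
  case (Suc n)
  have IH: "tpow N q u a Gel n = bas2 ((n,0),(n,0))" using Suc by simp
  show ?case
  proof (rule ext)
    fix k :: "(nat \<times> nat) \<times> (nat \<times> nat)"
    obtain k1 k2 where kk: "k = (k1, k2)" by (metis surj_pair)
    show "tpow N q u a Gel (Suc n) k = bas2 ((Suc n,0),(Suc n,0)) k"
    proof (cases "k1 \<in> box N \<and> k2 \<in> box N")
      case True
      have "tpow N q u a Gel (Suc n) (k1,k2) = tmult N q u a (bas2 ((1,0),(1,0))) (bas2 ((n,0),(n,0))) (k1,k2)"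
        unfolding tpow_Suc IH unfolding Gel_bas2 ..
      also have "\<dots> = bas2 ((1,0),(1,0)) ((1,0),(1,0)) * bas2 ((n,0),(n,0)) ((n,0),(n,0))
          * mtab N q u a (1,0) (n,0) k1 * mtab N q 1 0 (1,0) (n,0) k2"
        by (rule tmult_single2[OF True[THEN conjunct1] True[THEN conjunct2]])
           (use Suc.prems in \<open>auto simp: box_def bas2_def\<close>)
      also have "\<dots> = bas2 ((Suc n,0),(Suc n,0)) (k1,k2)" using Suc.prems
        by (auto simp: mtab_def bas2_def)
      finally show ?thesis unfolding kk .
    next
      case False
      then show ?thesis using Suc.prems unfolding kk by (auto simp: tpow_Suc tmult_out bas2_def box_def)
    qed
  qed
qed

definition Xinv :: "nat \<Rightarrow> (nat \<times> nat) \<times> (nat \<times> nat) \<Rightarrow> bool" where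
  "Xinv n k \<longleftrightarrow> fst (fst k) = 0 \<and> snd (fst k) + snd (snd k) = n \<and> fst (snd k) = snd (fst k)"

lemma X_pow:
  fixes q u a :: "'a::comm_ring_1"
  assumes "n < N"
  shows "(\<forall>k. tpow N q u a Xel n k \<noteq> 0 \<longrightarrow> Xinv n k) \<and> tpow N q u a Xel n ((0,0),(0,n)) = 1"
  using assms
proof (induction n)
  case 0 then show ?case by (auto simp: tpow_0 tunit_bas2 bas2_def Xinv_def split: if_splits)
next
  case (Suc n)
  define Y where "Y = tpow N q u a Xel n"
  have Yinv: "\<And>j. Y j \<noteq> 0 \<Longrightarrow> Xinv n j" and Yval: "Y ((0,0),(0,n)) = 1"
    using Suc unfolding Y_def by auto
  have SN: "Suc n < N" by fact
  have part1: "Xinv (Suc n) k" if nz: "tmult N q u a Xel Y k \<noteq> 0" for k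
  proof -
    obtain i j where ij: "i \<in> box N \<times> box N" "j \<in> box N \<times> box N" "Xel i \<noteq> (0::'a)" "Y j \<noteq> 0"
      "mtab N q u a (fst i) (fst j) (fst k) \<noteq> 0" "mtab N q 1 0 (snd i) (snd j) (snd k) \<noteq> 0"
      using tmult_nz[OF nz] by (elim bexE conjE) iprover
    have ii: "i = ((0,0),(0,1)) \<or> i = ((0,1),(1,0))" using Xel_nz[OF ij(3)] .
    have jinv: "Xinv n j" using Yinv[OF ij(4)] .
    obtain j11 j12 j21 j22 where jj: "j = ((j11,j12),(j21,j22))"
      by (rule that[of "fst (fst j)" "snd (fst j)" "fst (snd j)" "snd (snd j)"]) simp
    have jv: "j11 = 0" "j12 + j22 = n" "j21 = j12" using jinv unfolding jj Xinv_def by auto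
    have lt: "j12 < N" "Suc j12 < N" "j22 < N" "Suc j22 < N" using jv SN by linarith+
    have k1: "fst k = ((fst (fst i) + j11) mod N, (snd (fst i) + j12) mod N)"
      using mtab_nz[OF ij(5)] jj by simp
    have k2: "snd k = ((fst (snd i) + j21) mod N, (snd (snd i) + j22) mod N)"
      using mtab_nz[OF ij(6)] jj by simp
    from ii show ?thesis
    proof
      assume i: "i = ((0,0),(0,1))"
      have "fst k = (0, j12)" "snd k = (j12, Suc j22)" using k1 k2 jv lt unfolding i by simp_all
      then show ?thesis using jv unfolding Xinv_def by simp
    next
      assume i: "i = ((0,1),(1,0))"
      have "fst k = (0, Suc j12)" "snd k = (Suc j12, j22)" using k1 k2 jv lt unfolding i by simp_all
      then show ?thesis using jv unfolding Xinv_def by simp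
    qed
  qed
  have part2: "tmult N q u a Xel Y ((0,0),(0,Suc n)) = 1"
  proof -
    have "tmult N q u a Xel Y ((0,0),(0,Suc n)) = Xel ((0,0),(0,1)) * Y ((0,0),(0,n))
       * mtab N q u a (0,0) (0,0) (0,0) * mtab N q 1 0 (0,1) (0,n) (0,Suc n)"
    proof (rule tmult_single2)
      show "(0::nat,0::nat) \<in> box N" "(0::nat,Suc n) \<in> box N"
        "((0::nat,0::nat),(0::nat,1::nat)) \<in> box N \<times> box N" "((0::nat,0::nat),(0::nat,n)) \<in> box N \<times> box N"
        using SN by (auto simp: box_def)
    next
      fix i j :: "(nat \<times> nat) \<times> (nat \<times> nat)"
      assume "i \<in> box N \<times> box N" "j \<in> box N \<times> box N" and ne: "(i, j) \<noteq> (((0,0),(0,1)), ((0,0),(0,n)))"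
      show "Xel i * Y j * mtab N q u a (fst i) (fst j) (0,0)
         * mtab N q 1 0 (snd i) (snd j) (0::nat,Suc n) = 0"
      proof (rule ccontr)
        assume nz: "\<not> ?thesis"
        from prod4_nz[OF nz] have ij: "Xel i \<noteq> (0::'a)" "Y j \<noteq> 0" "mtab N q u a (fst i) (fst j) (0,0) \<noteq> 0"
          "mtab N q 1 0 (snd i) (snd j) (0, Suc n) \<noteq> 0" by simp_all
        have ii: "i = ((0,0),(0,1)) \<or> i = ((0,1),(1,0))" using Xel_nz[OF ij(1)] .
        have jinv: "Xinv n j" using Yinv[OF ij(2)] .
        obtain j11 j12 j21 j22 where jj: "j = ((j11,j12),(j21,j22))"
      by (rule that[of "fst (fst j)" "snd (fst j)" "fst (snd j)" "snd (snd j)"]) simp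
        have jv: "j11 = 0" "j12 + j22 = n" "j21 = j12" using jinv unfolding jj Xinv_def by auto
        have lt: "j12 < N" "Suc j12 < N" "j22 < N" "Suc j22 < N" using jv SN by linarith+
        have k1: "(0::nat,0::nat) = ((fst (fst i) + j11) mod N, (snd (fst i) + j12) mod N)"
          using mtab_nz[OF ij(3)] jj by simp
        have k2: "(0, Suc n) = ((fst (snd i) + j21) mod N, (snd (snd i) + j22) mod N)"
          using mtab_nz[OF ij(4)] jj by simp
        from ii show False
        proof
          assume i: "i = ((0,0),(0,1))"
          have "j12 = 0" "j22 = n" using k1 k2 jv lt SN unfolding i by simp_all
          then show False using ne jj jv i by simp
        next
          assume i: "i = ((0,1),(1,0))"
          have "Suc j12 mod N = 0" using k1 jv unfolding i by simp
          then show False using lt by simp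
        qed
      qed
    qed
    also have "\<dots> = 1" using SN by (simp add: Xel_bas2 bas2_def Yval mtab_def)
    finally show ?thesis .
  qed
  show ?case using part1 part2 unfolding Y_def tpow_Suc by blast
qed

lemma X_indep: fixes q u a :: "'a::comm_ring_1" assumes "n < N" shows "tpow N q u a Xel n = tpow N q 1 0 Xel n"
  using assms
proof (induction n)
  case 0 then show ?case by (simp add: tpow_0)
next
  case (Suc n)
  have "tmult N q u a Xel (tpow N q 1 0 Xel n) = tmult N q 1 0 Xel (tpow N q 1 0 Xel n)"
  proof (rule tmult_indep)
    fix i j assume xi: "Xel i \<noteq> (0::'a)" and yj: "tpow N q 1 0 Xel n j \<noteq> (0::'a)"
    have "n < N" using Suc.prems by simp
    then have "i = ((0,0),(0,1)) \<or> i = ((0,1),(1,0))" "Xinv n j"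
      using Xel_nz[OF xi] X_pow[of n N q 1 0] yj by blast+
    then show "fst (fst i) + fst (fst j) < N \<and> snd (fst i) + snd (fst j) < N"
      using Suc.prems unfolding Xinv_def by auto
  qed
  then show ?case using Suc by (simp add: tpow_Suc)
qed

lemma rho_bas:
  assumes "h \<in> box N"
  shows "rho N q u a (bas h) = tmult N q u a (tpow N q u a Gel (fst h)) (tpow N q u a Xel (snd h))"
proof (rule ext)
  fix k
  have "rho N q u a (bas h) k = (\<Sum>m\<in>box N. if m = h then
      tmult N q u a (tpow N q u a Gel (fst m)) (tpow N q u a Xel (snd m)) k else 0)"
    unfolding rho_alt by (rule sum.cong) (auto simp: bas_def)
  also have "\<dots> = tmult N q u a (tpow N q u a Gel (fst h)) (tpow N q u a Xel (snd h)) k"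
    using assms by (simp add: box_def)
  finally show "rho N q u a (bas h) k = tmult N q u a (tpow N q u a Gel (fst h)) (tpow N q u a Xel (snd h)) k" .
qed

lemma rho_indep:
  fixes q u a :: "'a::comm_ring_1"
  assumes h: "h \<in> box N"
  shows "rho N q u a (bas h) = rho N q 1 0 (bas h)"
proof -
  have hb: "fst h < N" "snd h < N" using h by (auto simp: box_def)
  have "tmult N q u a (bas2 ((fst h,0),(fst h,0))) (tpow N q 1 0 Xel (snd h))
      = tmult N q 1 0 (bas2 ((fst h,0),(fst h,0))) (tpow N q 1 0 Xel (snd h))"
  proof (rule tmult_indep)
    fix i j assume xi: "bas2 ((fst h,0),(fst h,0)) i \<noteq> (0::'a)" and yj: "tpow N q 1 0 Xel (snd h) j \<noteq> (0::'a)"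
    have "i = ((fst h,0),(fst h,0))" using xi by (auto simp: bas2_def split: if_splits)
    moreover have "Xinv (snd h) j" using conjunct1[OF X_pow[of "snd h" N q 1 0, OF hb(2)]] yj by blast
    ultimately have "i = ((fst h,0),(fst h,0))" "Xinv (snd h) j" by blast+
    then show "fst (fst i) + fst (fst j) < N \<and> snd (fst i) + snd (fst j) < N"
      using hb unfolding Xinv_def by auto
  qed
  moreover have "rho N q u a (bas h) = tmult N q u a (bas2 ((fst h,0),(fst h,0))) (tpow N q 1 0 Xel (snd h))"
    unfolding rho_bas[OF h] G_pow[OF hb(1)] X_indep[of "snd h" N q u a, OF hb(2)] ..
  moreover have "rho N q 1 0 (bas h) = tmult N q 1 0 (bas2 ((fst h,0),(fst h,0))) (tpow N q 1 0 Xel (snd h))"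
    unfolding rho_bas[OF h] G_pow[OF hb(1)] ..
  ultimately show ?thesis by simp
qed

lemma T_val:
  assumes ab: "a < N" "b < N" and m: "m1 < N" "m2 < N"
  shows "tmult N q u aa (tpow N q u aa Gel a) (tpow N q u aa Xel b) ((m1,0),(m1,m2))
    = (if (a,b) = (m1,m2) then 1 else (0::'a::comm_ring_1))"
proof -
  define Y where "Y = tpow N q u aa Xel b"
  have XP: "(\<forall>k. Y k \<noteq> 0 \<longrightarrow> Xinv b k) \<and> Y ((0,0),(0,b)) = 1"
    unfolding Y_def by (rule X_pow[of b N q u aa, OF ab(2)])
  have Yinv: "\<And>j. Y j \<noteq> 0 \<Longrightarrow> Xinv b j" using conjunct1[OF XP] by blast
  have Yval: "Y ((0,0),(0,b)) = 1" using conjunct2[OF XP] .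
  have G: "tpow N q u aa Gel a = bas2 ((a,0),(a,0))" using G_pow[OF ab(1)] .
  show ?thesis
  proof (cases "(a,b) = (m1,m2)")
    case True
    then have e: "m1 = a" "m2 = b" by auto
    have "tmult N q u aa (bas2 ((a,0),(a,0))) Y ((a,0),(a,b)) = bas2 ((a,0),(a,0)) ((a,0),(a,0)) * Y ((0,0),(0,b))
       * mtab N q u aa (a,0) (0,0) (a,0) * mtab N q 1 0 (a,0) (0,b) (a,b)"
    proof (rule tmult_single2)
      show "(a,0::nat) \<in> box N" "(a,b) \<in> box N"
        "((a,0::nat),(a,0::nat)) \<in> box N \<times> box N" "((0::nat,0::nat),(0::nat,b)) \<in> box N \<times> box N"
        using ab by (auto simp: box_def)
    next
      fix i j :: "(nat \<times> nat) \<times> (nat \<times> nat)"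
      assume "i \<in> box N \<times> box N" "j \<in> box N \<times> box N" and ne: "(i, j) \<noteq> (((a,0),(a,0)), ((0,0),(0,b)))"
      show "bas2 ((a,0),(a,0)) i * Y j * mtab N q u aa (fst i) (fst j) (a,0::nat)
         * mtab N q 1 0 (snd i) (snd j) (a,b) = 0"
      proof (rule ccontr)
        assume nz: "\<not> ?thesis"
        from prod4_nz[OF nz] have ij: "bas2 ((a,0),(a,0)) i \<noteq> (0::'a)" "Y j \<noteq> 0" "mtab N q u aa (fst i) (fst j) (a,0) \<noteq> 0"
          "mtab N q 1 0 (snd i) (snd j) (a,b) \<noteq> 0" by simp_all
        have ii: "i = ((a,0),(a,0))" using ij(1) by (simp add: bas2_def split: if_splits)
        have jinv: "Xinv b j" using Yinv[OF ij(2)] .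
        obtain j11 j12 j21 j22 where jj: "j = ((j11,j12),(j21,j22))"
      by (rule that[of "fst (fst j)" "snd (fst j)" "fst (snd j)" "snd (snd j)"]) simp
        have jv: "j11 = 0" "j12 + j22 = b" "j21 = j12" using jinv unfolding jj Xinv_def by auto
        have lt: "j12 < N" "j22 < N" using jv ab by linarith+
        have k1: "(a, 0::nat) = ((a + j11) mod N, (0 + j12) mod N)"
          using mtab_nz[OF ij(3)] jj ii by simp
        show False using ii k1 jv lt ne jj by auto
      qed
    qed
    also have "\<dots> = 1"
    proof -
      have m1: "mtab N q u aa (a,0) (0,0) (a,0) = 1" using ab(1) by (simp add: mtab_def)
      have m2: "mtab N q 1 0 (a,0) (0,b) (a,b) = 1" using ab by (simp add: mtab_def)
      have b1: "bas2 ((a,0),(a,0)) ((a,0),(a,0)) = (1::'a)" by (simp add: bas2_def)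
      show ?thesis unfolding m1 m2 b1 Yval by simp
    qed
    finally have c1: "tmult N q u aa (bas2 ((a,0),(a,0))) Y ((a,0),(a,b)) = 1" .
    have "tmult N q u aa (tpow N q u aa Gel a) (tpow N q u aa Xel b) ((m1,0),(m1,m2))
       = tmult N q u aa (bas2 ((a,0),(a,0))) Y ((a,0),(a,b))" unfolding G Y_def e ..
    then show ?thesis unfolding c1 if_P[OF True] .
  next
    case False
    have "tmult N q u aa (bas2 ((a,0),(a,0))) Y ((m1,0),(m1,m2)) = 0"
    proof (rule ccontr)
      assume nz: "tmult N q u aa (bas2 ((a,0),(a,0))) Y ((m1,0),(m1,m2)) \<noteq> 0"
      obtain i j where "i \<in> box N \<times> box N" "j \<in> box N \<times> box N" and ij: "bas2 ((a,0),(a,0)) i \<noteq> (0::'a)" "Y j \<noteq> 0"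
        "mtab N q u aa (fst i) (fst j) (m1,0) \<noteq> 0" "mtab N q 1 0 (snd i) (snd j) (m1,m2) \<noteq> 0"
        using tmult_nz[OF nz] unfolding fst_conv snd_conv by (elim bexE conjE) iprover
      have ii: "i = ((a,0),(a,0))" using ij(1) by (simp add: bas2_def split: if_splits)
      have jinv: "Xinv b j" using Yinv[OF ij(2)] .
      obtain j11 j12 j21 j22 where jj: "j = ((j11,j12),(j21,j22))"
      by (rule that[of "fst (fst j)" "snd (fst j)" "fst (snd j)" "snd (snd j)"]) simp
      have jv: "j11 = 0" "j12 + j22 = b" "j21 = j12" using jinv unfolding jj Xinv_def by auto
      have lt: "j12 < N" "j22 < N" using jv ab by linarith+
      have k1: "(m1, 0::nat) = ((a + j11) mod N, (0 + j12) mod N)"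
        using mtab_nz[OF ij(3)] jj ii by simp
      have k2: "(m1, m2) = ((a + j21) mod N, (0 + j22) mod N)"
        using mtab_nz[OF ij(4)] jj ii by simp
      have e1: "m1 = a" "j12 = 0" using k1 jv lt ab by simp_all
      have e2: "m2 = j22" using k2 jv lt by simp
      have "b = m2" using e1(2) e2 jv(2) by simp
      then show False using False e1(1) by simp
    qed
    then show ?thesis using False G unfolding Y_def by simp
  qed
qed

lemma Delta_g:
  assumes N: "N \<ge> 2"
  shows "Delta N q (bas (1,0)) = (bas2 ((1,0),(1,0)) :: _ \<Rightarrow> 'a::comm_ring_1)"
proof (rule ext)
  fix k :: "(nat \<times> nat) \<times> (nat \<times> nat)"
  have h: "(1::nat,0::nat) \<in> box N" using N by (auto simp: box_def)
  have D: "Delta N q (bas (1,0)) = tmult N q 1 0 (bas2 ((1,0),(1,0))) (bas2 ((0,0),(0,0)) :: _ \<Rightarrow> 'a)"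
    unfolding Delta_def rho_bas[OF h] using N by (simp add: G_pow tpow_0 tunit_bas2)
  obtain k1 k2 where kk: "k = (k1, k2)" by (metis surj_pair)
  show "Delta N q (bas (1,0)) k = bas2 ((1,0),(1,0)) k"
  proof (cases "k1 \<in> box N \<and> k2 \<in> box N")
    case True
    have "tmult N q 1 0 (bas2 ((1,0),(1,0))) (bas2 ((0,0),(0,0)) :: _ \<Rightarrow> 'a) (k1,k2)
      = bas2 ((1,0),(1,0)) ((1,0),(1,0)) * bas2 ((0,0),(0,0)) ((0,0),(0,0))
          * mtab N q 1 0 (1,0) (0,0) k1 * mtab N q 1 0 (1,0) (0,0) k2"
      by (rule tmult_single2[OF True[THEN conjunct1] True[THEN conjunct2]])
         (use N in \<open>auto simp: box_def bas2_def\<close>)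
    also have "\<dots> = bas2 ((1,0),(1,0)) (k1,k2)" using N
      by (auto simp: mtab_def bas2_def)
    finally show ?thesis using D unfolding kk by simp
  next
    case False
    then show ?thesis using N D unfolding kk by (auto simp: tmult_out bas2_def box_def)
  qed
qed


lemma finite_box [simp]: "finite (box N)" by (simp add: box_def)

lemma factA:
  fixes q u a :: "'a::comm_ring_1"
  assumes N: "N \<ge> 2" and phi: "phi \<in> comod_alg_maps N q u a"
  shows "phi 1 (1,0) = (\<lambda>k. phi 1 (1,0) (1,0) * bas (1,0) k)"
proof -
  define b where "b = phi 1 (1,0)"
  have h10: "(1::nat,0::nat) \<in> box N" using N by (auto simp: box_def)
  have bv: "b \<in> bvec N" and H: "rho N q u a b = (\<lambda>(k1, k2). \<Sum>j\<in>box N. Delta N q (bas (1,0)) (j, k2) * phi 1 j k1)"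
    using phi h10 unfolding comod_alg_maps_def b_def by auto
  have zero: "b m = 0" if m: "m \<in> box N" "m \<noteq> (1,0)" for m
  proof -
    obtain m1 m2 where mm: "m = (m1,m2)" by (metis surj_pair)
    have mb: "m1 < N" "m2 < N" using m mm by (auto simp: box_def)
    have "rho N q u a b ((m1,0),(m1,m2)) = (\<Sum>m'\<in>box N. if m' = (m1,m2) then b m' else 0)"
      unfolding rho_alt
    proof (rule sum.cong)
      fix m' assume "m' \<in> box N"
      then have "fst m' < N" "snd m' < N" by (auto simp: box_def)
      then show "b m' * tmult N q u a (tpow N q u a Gel (fst m')) (tpow N q u a Xel (snd m')) ((m1, 0), m1, m2)
          = (if m' = (m1, m2) then b m' else 0)"
        using T_val[of "fst m'" N "snd m'" m1 m2 q u a] mb by (cases m') auto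
    qed simp
    also have "\<dots> = b (m1,m2)" using m mm by (simp add: sum.delta)
    finally have L: "rho N q u a b ((m1,0),(m1,m2)) = b (m1,m2)" .
    have "rho N q u a b ((m1,0),(m1,m2)) = (\<Sum>j\<in>box N. Delta N q (bas (1,0)) (j, (m1,m2)) * phi 1 j (m1,0))"
      unfolding H by simp
    also have "\<dots> = 0" unfolding Delta_g[OF N] using m mm by (auto simp: bas2_def intro!: sum.neutral)
    finally show ?thesis using L mm by simp
  qed
  show ?thesis
  proof (rule ext)
    fix k :: "nat \<times> nat"
    show "phi 1 (1,0) k = phi 1 (1,0) (1,0) * bas (1,0) k"
    proof (cases "k = (1,0)")
      case True then show ?thesis by (simp add: bas_def)
    next
      case False
      have "b k = 0"
      proof (cases "k \<in> box N")
        case True then show ?thesis using zero False by simp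
      next
        case False then show ?thesis using bv unfolding bvec_def by blast
      qed
      then show ?thesis using False by (simp add: bas_def b_def)
    qed
  qed
qed

lemma phi1_comod:
  fixes q u a :: "'a::comm_ring_1"
  assumes N: "N \<ge> 2"
  shows "(\<lambda>i h. bas h) \<in> comod_alg_maps N q u a"
  unfolding comod_alg_maps_def
proof (intro CollectI allI impI ballI conjI)
  fix i :: nat and h assume h: "h \<in> box N"
  show "bas h \<in> bvec N" using h by (auto simp: bvec_def bas_def)
  have D: "rho N q u a (bas h) = Delta N q (bas h)" unfolding Delta_def by (rule rho_indep[OF h])
  have Dout: "Delta N q (bas h) (k1, k2) = (0::'a)" if "k1 \<notin> box N" for k1 k2
    unfolding Delta_def rho_bas[OF h] using that by (simp add: tmult_out)
  show "rho N q u a (bas h) = (\<lambda>(k1, k2). \<Sum>j\<in>box N. Delta N q (bas h) (j, k2) * bas j k1)"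
  proof (rule ext)
    fix k :: "(nat \<times> nat) \<times> (nat \<times> nat)"
    obtain k1 k2 where kk: "k = (k1,k2)" by (metis surj_pair)
    have "(\<Sum>j\<in>box N. Delta N q (bas h) (j, k2) * bas j k1) = (\<Sum>j\<in>box N. if j = k1 then Delta N q (bas h) (k1, k2) else 0)"
      by (rule sum.cong) (auto simp: bas_def)
    also have "\<dots> = Delta N q (bas h) (k1, k2)" using Dout by simp
    finally show "rho N q u a (bas h) k = (\<lambda>(k1, k2). \<Sum>j\<in>box N. Delta N q (bas h) (j, k2) * bas j k1) k"
      unfolding kk D by simp
  qed
qed

lemma bmult_bas:
  assumes p: "p \<in> box N" "p' \<in> box N"
  shows "bmult N q u a (\<lambda>k. c * bas p k) (\<lambda>k. d * bas p' k) = (\<lambda>k. if k \<in> box N then c * d * mtab N q u a p p' k else 0)"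
proof (rule ext)
  fix k
  have inner: "(\<Sum>j\<in>box N. c * bas p i * (d * bas p' j) * mtab N q u a i j k) = (if i = p then c * d * mtab N q u a p p' k else 0)" for i
  proof -
    have "(\<Sum>j\<in>box N. c * bas p i * (d * bas p' j) * mtab N q u a i j k)
      = (\<Sum>j\<in>box N. if j = p' then c * bas p i * d * mtab N q u a i p' k else 0)"
      by (rule sum.cong) (auto simp: bas_def)
    also have "\<dots> = c * bas p i * d * mtab N q u a i p' k" using p by simp
    finally show ?thesis by (simp add: bas_def)
  qed
  show "bmult N q u a (\<lambda>k. c * bas p k) (\<lambda>k. d * bas p' k) k = (if k \<in> box N then c * d * mtab N q u a p p' k else 0)"
    unfolding bmult_def using p by (simp add: inner)
qed

lemma bpow:
  fixes q u a c :: "'a::comm_ring_1"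
  assumes N: "N \<ge> 2"
  shows "((bmult N q u a (\<lambda>k. c * bas (1,0) k)) ^^ n) bunit = (\<lambda>k. c ^ n * u ^ (n div N) * bas (n mod N, 0) k)"
proof (induction n)
  case 0 then show ?case by (simp add: bunit_def)
next
  case (Suc n)
  define r where "r = n mod N"
  have rN: "r < N" using N unfolding r_def by simp
  have b1: "(1::nat,0::nat) \<in> box N" "(r, 0) \<in> box N" using N rN by (auto simp: box_def)
  have "((bmult N q u a (\<lambda>k. c * bas (1,0) k)) ^^ Suc n) bunit
      = bmult N q u a (\<lambda>k. c * bas (1,0) k) (\<lambda>k. (c ^ n * u ^ (n div N)) * bas (r, 0) k)"
    using Suc by (simp add: r_def)
  also have "\<dots> = (\<lambda>k. if k \<in> box N then c * (c ^ n * u ^ (n div N)) * mtab N q u a (1,0) (r,0) k else 0)"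
    by (rule bmult_bas[OF b1])
  also have "\<dots> = (\<lambda>k. c ^ Suc n * u ^ (Suc n div N) * bas (Suc n mod N, 0) k)"
  proof (rule ext)
    fix k :: "nat \<times> nat"
    have N0: "\<not> N \<le> 0" using N by simp
    show "(if k \<in> box N then c * (c ^ n * u ^ (n div N)) * mtab N q u a (1,0) (r,0) k else 0)
        = c ^ Suc n * u ^ (Suc n div N) * bas (Suc n mod N, 0) k"
    proof (cases "Suc r = N")
      case True
      have m: "Suc n mod N = 0" "Suc n div N = Suc (n div N)"
        using True by (simp_all add: mod_Suc div_Suc r_def)
      have "(0::nat, 0::nat) \<in> box N" using N by (simp add: box_def)
      then show ?thesis using True N0 unfolding m
        by (auto simp: mtab_def bas_def algebra_simps)
    next
      case False
      then have SrN: "Suc r < N" using rN by simp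
      have m: "Suc n mod N = Suc r" "Suc n div N = n div N"
        using False SrN by (simp_all add: mod_Suc div_Suc r_def)
      have "(Suc r, 0::nat) \<in> box N" using SrN by (simp add: box_def)
      then show ?thesis using SrN N0 unfolding m
        by (auto simp: mtab_def bas_def algebra_simps)
    qed
  qed
  finally show ?case .
qed

lemma foldr_rep: "foldr f (replicate n x) z = (f x ^^ n) z"
  by (induction n) simp_all

definition Pw :: "'a::comm_ring_1 poly \<Rightarrow> nat \<Rightarrow> (nat \<times> (nat \<times> nat)) list \<Rightarrow> 'a" where
  "Pw Q N w = (if (\<forall>x\<in>set w. x = (1,(1,0))) \<and> N dvd length w then coeff Q (length w div N) else 0)"

lemma Pw_rep: "N > 0 \<Longrightarrow> Pw Q N (replicate (j * N) (1,(1,0))) = coeff Q j"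
  unfolding Pw_def by simp

lemma Pw_supp:
  assumes "N > 0"
  shows "{w. Pw Q N w \<noteq> 0} = (\<lambda>j. replicate (j * N) (1::nat,(1::nat,0::nat))) ` {j. coeff Q j \<noteq> 0}"
proof (intro equalityI subsetI)
  fix w :: "(nat \<times> (nat \<times> nat)) list" assume "w \<in> {w. Pw Q N w \<noteq> 0}"
  then have w: "\<forall>x\<in>set w. x = (1,(1,0))" "N dvd length w" "coeff Q (length w div N) \<noteq> 0"
    unfolding Pw_def by (auto split: if_splits)
  have "w = replicate (length w) (1,(1,0))" using w(1) by (simp add: replicate_length_same)
  also have "length w = (length w div N) * N" using w(2) by simp
  finally show "w \<in> (\<lambda>j. replicate (j * N) (1,(1,0))) ` {j. coeff Q j \<noteq> 0}" using w(3) by blast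
next
  fix w :: "(nat \<times> (nat \<times> nat)) list" assume "w \<in> (\<lambda>j. replicate (j * N) (1,(1,0))) ` {j. coeff Q j \<noteq> 0}"
  then obtain j where j: "w = replicate (j * N) (1,(1,0))" "coeff Q j \<noteq> 0" by blast
  have "Pw Q N w = coeff Q j" unfolding j(1) by (rule Pw_rep[OF assms])
  then show "w \<in> {w. Pw Q N w \<noteq> 0}" using j(2) by simp
qed

lemma Pw_tpoly:
  assumes N: "N \<ge> 2"
  shows "Pw Q N \<in> tpoly N"
proof -
  have "finite {j. coeff Q j \<noteq> 0}" by (rule finite_subset[of _ "{..degree Q}"]) (auto intro: le_degree)
  then have "finite {w. Pw Q N w \<noteq> 0}" using N by (simp add: Pw_supp)
  moreover have "\<forall>w. Pw Q N w \<noteq> 0 \<longrightarrow> (\<forall>l\<in>set w. 1 \<le> fst l \<and> snd l \<in> box N)"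
    using N by (auto simp: Pw_def box_def split: if_splits)
  ultimately show ?thesis unfolding tpoly_def by blast
qed

lemma teval_Pw:
  fixes q u a c :: "'a::comm_ring_1"
  assumes N: "N \<ge> 2" and phi: "phi 1 (1,0) = (\<lambda>k. c * bas (1,0) k)"
  shows "teval N q u a phi (Pw Q N) = (\<lambda>k. poly Q (u * c ^ N) * bunit k)"
proof (rule ext)
  fix k
  have N0: "N > 0" using N by simp
  define J where "J = {j. coeff Q j \<noteq> 0}"
  have J: "J \<subseteq> {..degree Q}" unfolding J_def by (auto intro: le_degree)
  have inj: "inj_on (\<lambda>j. replicate (j * N) (1::nat,(1::nat,0::nat))) J"
    using N0 by (auto simp: inj_on_def dest: arg_cong[of _ _ length])
  have F: "foldr (\<lambda>l acc. bmult N q u a (phi (fst l) (snd l)) acc) (replicate (j * N) (1,(1,0))) bunit k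
      = c ^ (j * N) * u ^ j * bas (0,0) k" for j
    unfolding foldr_rep prod.sel phi bpow[OF N] using N0 by simp
  have "teval N q u a phi (Pw Q N) k = (\<Sum>w\<in>(\<lambda>j. replicate (j * N) (1,(1,0))) ` J.
      Pw Q N w * foldr (\<lambda>l acc. bmult N q u a (phi (fst l) (snd l)) acc) w bunit k)"
    unfolding teval_def Pw_supp[OF N0] J_def ..
  also have "\<dots> = (\<Sum>j\<in>J. coeff Q j * (c ^ (j * N) * u ^ j * bas (0,0) k))"
    unfolding sum.reindex[OF inj] comp_def Pw_rep[OF N0] F ..
  also have "\<dots> = (\<Sum>j\<in>J. coeff Q j * (u * c ^ N) ^ j * bunit k)"
    by (rule sum.cong) (simp_all add: bunit_def power_mult_distrib power_mult[symmetric] ac_simps)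
  also have "\<dots> = (\<Sum>j\<in>J. coeff Q j * (u * c ^ N) ^ j) * bunit k"
    by (simp add: sum_distrib_right)
  also have "(\<Sum>j\<in>J. coeff Q j * (u * c ^ N) ^ j) = poly Q (u * c ^ N)"
    unfolding poly_altdef using J by (intro sum.mono_neutral_left) (auto simp: J_def)
  finally show "teval N q u a phi (Pw Q N) k = poly Q (u * c ^ N) * bunit k" .
qed


theorem proposition3p9:
  fixes q u u' a a' :: "'a::{comm_ring_1,finite}" and N :: nat
  assumes "N \<ge> 2"
    and "(of_nat N :: 'a) dvd 1"
    and "poly (map_poly of_int (cyclotomic_poly N)) q = 0"
    and "u dvd 1" and "u' dvd 1"
    and "poly_H_identities N q u a = poly_H_identities N q u' a'"
  shows "\<exists>s. s dvd 1 \<and> u' = s ^ N * u"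
proof -
  have N: "N \<ge> 2" by fact
  obtain ui where ui: "1 = u * ui" using assms(4) by (auto elim: dvdE)
  define Q where "Q = (\<Prod>r\<in>(UNIV::'a set). [:- (u * r ^ N), 1:])"
  have polyQ: "poly Q x = (\<Prod>r\<in>UNIV. x - u * r ^ N)" for x
    unfolding Q_def poly_prod by (rule prod.cong) simp_all
  have "Pw Q N \<in> poly_H_identities N q u a"
    unfolding poly_H_identities_def
  proof (intro CollectI conjI ballI)
    show "Pw Q N \<in> tpoly N" by (rule Pw_tpoly[OF N])
  next
    fix phi assume phi: "phi \<in> comod_alg_maps N q u a"
    define c where "c = phi 1 (1,0) (1,0)"
    have "phi 1 (1,0) = (\<lambda>k. c * bas (1,0) k)" unfolding c_def by (rule factA[OF N phi])
    then have "teval N q u a phi (Pw Q N) = (\<lambda>k. poly Q (u * c ^ N) * bunit k)"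
      by (rule teval_Pw[OF N])
    moreover have "poly Q (u * c ^ N) = 0" unfolding polyQ by (rule prod_zero) auto
    ultimately show "teval N q u a phi (Pw Q N) = (\<lambda>_. 0)" by simp
  qed
  then have "Pw Q N \<in> poly_H_identities N q u' a'" using assms(6) by simp
  moreover have "(\<lambda>i h. bas h) \<in> comod_alg_maps N q u' a'" by (rule phi1_comod[OF N])
  ultimately have "teval N q u' a' (\<lambda>i h. bas h) (Pw Q N) = (\<lambda>_. 0)"
    unfolding poly_H_identities_def by blast
  moreover have "teval N q u' a' (\<lambda>i h. bas h) (Pw Q N) = (\<lambda>k. poly Q (u' * 1 ^ N) * bunit k)"
    by (rule teval_Pw[OF N]) simp
  ultimately have "poly Q u' * bunit (0,0) = 0" by (metis mult_1_right power_one)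
  then have P0: "(\<Prod>r\<in>UNIV. u' - u * r ^ N) = 0" by (simp add: bunit_def bas_def polyQ)
  have "(\<Prod>r\<in>UNIV. ui * u' - r ^ N) = (\<Prod>r\<in>UNIV. ui * (u' - u * r ^ N))"
  proof (rule prod.cong)
    fix r :: 'a
    have "ui * (u * r ^ N) = r ^ N" using ui by (metis mult.assoc mult.commute mult_1)
    then show "ui * u' - r ^ N = ui * (u' - u * r ^ N)" by (simp add: right_diff_distrib)
  qed simp
  also have "\<dots> = (\<Prod>r\<in>(UNIV::'a set). ui) * (\<Prod>r\<in>UNIV. u' - u * r ^ N)" by (rule prod.distrib[of "\<lambda>_. ui" "\<lambda>r. u' - u * r ^ N" "UNIV::'a set"])
  also have "\<dots> = 0" using P0 by simp
  finally have P1: "(\<Prod>r\<in>UNIV. ui * u' - r ^ N) = 0" .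
  have uiu: "(ui * u') dvd 1" using ui assms(5) by (metis dvd_triv_right mult_dvd_mono mult_1 dvd_trans)
  obtain s where s: "s dvd 1" "ui * u' = s ^ N"
    using nth_power_lemma[OF assms(2) _ uiu P1] N by auto
  have "u' = u * (ui * u')" using ui by (metis mult.assoc mult_1)
  then have "u' = s ^ N * u" using s(2) by (simp add: mult.commute)
  then show ?thesis using s(1) by blast
qed

end
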